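(* Let $\ell>0$ and let $\alpha\in C^0([0,\ell/4],\mathbb{R}^3)$ have length $\mathscr{L}(\alpha)\in(0,\infty)$. Let $g:[0,\ell)\to\mathbb{R}^3$ be given by $g(t)=\alpha(t)$ on $[0,\ell/4)$, $g(t)=R_1\alpha(\psi_1^\ell(t))$ on $[\ell/4,\ell/2)$, $g(t)=R_2\alpha(\psi_2^\ell(t))$ on $[\ell/2,3\ell/4)$, $g(t)=R_3\alpha(\psi_3^\ell(t))$ on $[3\ell/4,\ell)$. Then $\mathscr{L}(g)=4\mathscr{L}(\alpha)$. Moreover, (the $\ell$-periodic extension of) $g$ is a continuous closed curve, i.e. of class $C^0(\mathbb{R}/\ell\mathbb{Z},\mathbb{R}^3)$, if and only if $\alpha(0)\in\mathbb{R}\mathbf{e}_3$ and $\alpha(\ell/4)\in\mathbb{R}\mathbf{e}_1$. Finally, if $\alpha$ is continuously differentiable, then $g$ is of class $C^1(\mathbb{R}/\ell\mathbb{Z},\mathbb{R}^3)$ if and only if in addition $\alpha'(0)\in\mathrm{span}\{\mathbf{e}_1,\mathbf{e}_2\}$ and $\alpha'(\ell/4)\in\mathrm{span}\{\mathbf{e}_2,\mathbf{e}_3\}$.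
   Context: $\mathbf{e}_1,\mathbf{e}_2,\mathbf{e}_3$ is the standard basis of $\mathbb{R}^3$; $\mathscr{L}$ denotes length. $R_1=\mathrm{diag}(1,-1,-1)$, $R_2=\mathrm{diag}(-1,1,-1)$, $R_3=\mathrm{diag}(-1,-1,1)$. On $\mathbb{R}/\ell\mathbb{Z}$: $\psi_1^\ell(t)=-t+\ell/2$, $\psi_2^\ell(t)=t-\ell/2$, $\psi_3^\ell(t)=-t+\ell$ (mod $\ell$). *)

theory Defs
  imports "HOL-Analysis.Analysis"
begin

definition rmod :: "real \<Rightarrow> real \<Rightarrow> real" where
  "rmod l x = x - l * of_int \<lfloor>x / l\<rfloor>"

definition psi1 :: "real \<Rightarrow> real \<Rightarrow> real" where "psi1 l t = rmod l (- t + l / 2)"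
definition psi2 :: "real \<Rightarrow> real \<Rightarrow> real" where "psi2 l t = rmod l (t - l / 2)"
definition psi3 :: "real \<Rightarrow> real \<Rightarrow> real" where "psi3 l t = rmod l (- t + l)"

definition R1 :: "real^3^3" where
  "R1 = (\<chi> i j. if i = j then (if i = 1 then 1 else -1) else 0)"
definition R2 :: "real^3^3" where
  "R2 = (\<chi> i j. if i = j then (if i = 2 then 1 else -1) else 0)"
definition R3 :: "real^3^3" where
  "R3 = (\<chi> i j. if i = j then (if i = 3 then 1 else -1) else 0)"

definition e1 :: "real^3" where "e1 = axis 1 1"
definition e2 :: "real^3" where "e2 = axis 2 1"
definition e3 :: "real^3" where "e3 = axis 3 1"

definition curve_length :: "(real \<Rightarrow> 'a::real_normed_vector) \<Rightarrow> real set \<Rightarrow> ereal" where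
  "curve_length f I =
     (SUP ts \<in> {ts. sorted ts \<and> set ts \<subseteq> I}.
        ereal (\<Sum>i < length ts - 1. dist (f (ts ! i)) (f (ts ! Suc i))))"

definition per_ext :: "real \<Rightarrow> (real \<Rightarrow> 'a) \<Rightarrow> real \<Rightarrow> 'a" where
  "per_ext l g t = g (rmod l t)"

end

theory Submission
  imports Defs
begin


lemma rmod_id: "0 \<le> t \<Longrightarrow> t < l \<Longrightarrow> rmod l t = t"
  unfolding rmod_def by (simp add: floor_eq_iff)

lemma rmod_neg: "l > 0 \<Longrightarrow> -l \<le> t \<Longrightarrow> t < 0 \<Longrightarrow> rmod l t = t + l"
proof -
  assume a: "l > 0" "-l \<le> t" "t < 0"
  have "\<lfloor>t / l\<rfloor> = -1" using a by (simp add: floor_eq_iff field_simps)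
  thus ?thesis unfolding rmod_def by simp
qed

lemma rmod_l: "l > 0 \<Longrightarrow> rmod l l = 0"
  unfolding rmod_def by simp

lemma rmod_range: "l > 0 \<Longrightarrow> 0 \<le> rmod l t \<and> rmod l t < l"
proof -
  assume l: "l > 0"
  have "of_int \<lfloor>t / l\<rfloor> * l \<le> (t / l) * l" by (rule mult_right_mono) (use l in auto)
  moreover have "(t / l) * l < (of_int \<lfloor>t / l\<rfloor> + 1) * l" by (rule mult_strict_right_mono) (use l in auto)
  ultimately have "l * of_int \<lfloor>t / l\<rfloor> \<le> t" "t < l * of_int \<lfloor>t / l\<rfloor> + l" using l by (simp_all add: algebra_simps)
  thus ?thesis unfolding rmod_def by simp
qed

lemma rmod_shift: "l > 0 \<Longrightarrow> rmod l (t + of_int k * l) = rmod l t"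
proof -
  assume l: "l > 0"
  have "(t + of_int k * l) / l = t / l + of_int k" using l by (simp add: field_simps)
  hence "\<lfloor>(t + of_int k * l) / l\<rfloor> = \<lfloor>t / l\<rfloor> + k" by simp
  thus ?thesis unfolding rmod_def by (simp add: algebra_simps)
qed

lemma per_ext_shift: "l > 0 \<Longrightarrow> per_ext l h (t + of_int k * l) = per_ext l h t"
  unfolding per_ext_def by (simp add: rmod_shift)

lemma R1_apply: "(R1 *v v) $ i = (if i = 1 then v $ i else - v $ i)"
  unfolding R1_def matrix_vector_mult_def by (simp add: if_distrib[of "\<lambda>x. x * _"] cong: if_cong)
lemma R2_apply: "(R2 *v v) $ i = (if i = 2 then v $ i else - v $ i)"
  unfolding R2_def matrix_vector_mult_def by (simp add: if_distrib[of "\<lambda>x. x * _"] cong: if_cong)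
lemma R3_apply: "(R3 *v v) $ i = (if i = 3 then v $ i else - v $ i)"
  unfolding R3_def matrix_vector_mult_def by (simp add: if_distrib[of "\<lambda>x. x * _"] cong: if_cong)
lemma neg_mv: "((- M) *v v) = - (M *v (v :: real^'n))"
  by (simp add: vec_eq_iff matrix_vector_mult_def sum_negf)

lemma norm_R: 
  assumes "\<And>i v. (R *v v) $ i = (if i = k then v $ i else - v $ i)"
  shows "norm (R *v (v::real^3)) = norm v"
  unfolding norm_vec_def by (rule L2_set_cong) (auto simp: assms)

lemma dist_R:
  assumes "\<And>i v. (R *v v) $ i = (if i = k then v $ i else - v $ i)"
  shows "dist (R *v (x::real^3)) (R *v y) = dist x y"
  unfolding dist_norm matrix_vector_mult_diff_distrib[symmetric] using norm_R[OF assms] by blast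



definition ps :: "(real \<Rightarrow> 'a::real_normed_vector) \<Rightarrow> real list \<Rightarrow> real" where
  "ps f ts = (\<Sum>i < length ts - 1. dist (f (ts ! i)) (f (ts ! Suc i)))"

lemma curve_length_ps: "curve_length f I = (SUP ts \<in> {ts. sorted ts \<and> set ts \<subseteq> I}. ereal (ps f ts))"
  unfolding curve_length_def ps_def by simp

lemma curve_length_cong: "(\<And>t. t \<in> I \<Longrightarrow> f t = h t) \<Longrightarrow> curve_length f I = curve_length h I"
  unfolding curve_length_ps ps_def
proof (intro SUP_cong refl arg_cong[where f=ereal] sum.cong)
  fix ts i assume a: "\<And>t. t \<in> I \<Longrightarrow> f t = h t" "ts \<in> {ts. sorted ts \<and> set ts \<subseteq> I}"
    "i \<in> {..<length ts - 1}"
  hence "ts ! i \<in> I" "ts ! Suc i \<in> I" by (auto intro!: subsetD[OF _ nth_mem])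
  thus "dist (f (ts ! i)) (f (ts ! Suc i)) = dist (h (ts ! i)) (h (ts ! Suc i))" using a by simp
qed

lemma curve_length_iso:
  assumes "\<And>x y. dist (R x) (R y) = dist x y"
  shows "curve_length (\<lambda>t. R (f t)) I = curve_length f I"
  unfolding curve_length_ps ps_def assms by simp

lemma ps_map: "ps f (map h ts) = ps (\<lambda>t. f (h t)) ts"
  unfolding ps_def by (intro sum.cong) auto

lemma ps_rev: "ps f (rev ts) = ps f ts"
proof -
  let ?n = "length ts"
  have "ps f (rev ts) = (\<Sum>i < ?n - 1. dist (f (ts ! (?n - Suc i))) (f (ts ! (?n - Suc (Suc i)))))"
    unfolding ps_def by (intro sum.cong) (auto simp: rev_nth)
  also have "\<dots> = (\<Sum>j < ?n - 1. dist (f (ts ! Suc j)) (f (ts ! j)))"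
    by (rule sum.reindex_bij_witness[of _ "\<lambda>j. ?n - 2 - j" "\<lambda>i. ?n - 2 - i"])
       (auto simp: Suc_diff_Suc numeral_2_eq_2)
  also have "\<dots> = ps f ts" unfolding ps_def by (simp add: dist_commute)
  finally show ?thesis .
qed

lemma curve_length_reflect:
  "curve_length (\<lambda>t. f (c - t)) I = curve_length f ((\<lambda>t. c - t) ` I)"
proof -
  let ?h = "\<lambda>t::real. c - t"
  have eq: "{ts. sorted ts \<and> set ts \<subseteq> ?h ` I} = (\<lambda>ts. rev (map ?h ts)) ` {ts. sorted ts \<and> set ts \<subseteq> I}"
  proof (intro equalityI subsetI)
    fix ts assume "ts \<in> {ts. sorted ts \<and> set ts \<subseteq> ?h ` I}"
    hence ts: "sorted ts" "set ts \<subseteq> ?h ` I" by auto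
    have "ts = rev (map ?h (rev (map ?h ts)))" by (simp add: rev_map comp_def)
    moreover have "sorted (rev (map ?h ts))" using ts(1)
      by (simp add: sorted_wrt_rev sorted_wrt_map)
    moreover have "set (rev (map ?h ts)) \<subseteq> I" using ts(2) by auto
    ultimately show "ts \<in> (\<lambda>ts. rev (map ?h ts)) ` {ts. sorted ts \<and> set ts \<subseteq> I}" by blast
  next
    fix ts assume "ts \<in> (\<lambda>ts. rev (map ?h ts)) ` {ts. sorted ts \<and> set ts \<subseteq> I}"
    then obtain t0 where t0: "sorted t0" "set t0 \<subseteq> I" "ts = rev (map ?h t0)" by auto
    have "sorted ts" using t0
      by (simp add: sorted_wrt_rev sorted_wrt_map)
    thus "ts \<in> {ts. sorted ts \<and> set ts \<subseteq> ?h ` I}" using t0 by auto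
  qed
  show ?thesis
    unfolding curve_length_ps eq image_image ps_rev ps_map ..
qed

lemma curve_length_shift:
  "curve_length (\<lambda>t. f (t - c)) I = curve_length f ((\<lambda>t. t - c) ` I)"
proof -
  let ?h = "\<lambda>t::real. t - c"
  have eq: "{ts. sorted ts \<and> set ts \<subseteq> ?h ` I} = (\<lambda>ts. map ?h ts) ` {ts. sorted ts \<and> set ts \<subseteq> I}"
  proof (intro equalityI subsetI)
    fix ts assume "ts \<in> {ts. sorted ts \<and> set ts \<subseteq> ?h ` I}"
    hence ts: "sorted ts" "set ts \<subseteq> ?h ` I" by auto
    have "ts = map ?h (map (\<lambda>t. t + c) ts)" by (simp add: comp_def)
    moreover have "sorted (map (\<lambda>t. t + c) ts)" using ts(1)
      by (simp add: sorted_map)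
    moreover have "set (map (\<lambda>t. t + c) ts) \<subseteq> I" using ts(2) by auto
    ultimately show "ts \<in> (\<lambda>ts. map ?h ts) ` {ts. sorted ts \<and> set ts \<subseteq> I}" by blast
  next
    fix ts assume "ts \<in> (\<lambda>ts. map ?h ts) ` {ts. sorted ts \<and> set ts \<subseteq> I}"
    then obtain t0 where t0: "sorted t0" "set t0 \<subseteq> I" "ts = map ?h t0" by auto
    have "sorted ts" using t0 by (simp add: sorted_map)
    thus "ts \<in> {ts. sorted ts \<and> set ts \<subseteq> ?h ` I}" using t0 by auto
  qed
  show ?thesis
    unfolding curve_length_ps eq image_image ps_map ..
qed

lemma curve_length_approx:
  fixes \<phi> :: "real \<Rightarrow> real \<Rightarrow> real"
  assumes cont: "continuous_on T f" and ST: "S \<subseteq> T"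
    and inS: "\<And>d t. 0 < d \<Longrightarrow> d < 1 \<Longrightarrow> t \<in> T \<Longrightarrow> \<phi> d t \<in> S"
    and mono: "\<And>d s t. 0 < d \<Longrightarrow> d < 1 \<Longrightarrow> s \<le> t \<Longrightarrow> \<phi> d s \<le> \<phi> d t"
    and lim: "\<And>t. t \<in> T \<Longrightarrow> ((\<lambda>d. \<phi> d t) \<longlongrightarrow> t) (at_right 0)"
  shows "curve_length f S = curve_length f T"
proof (rule antisym)
  show "curve_length f S \<le> curve_length f T"
    unfolding curve_length_ps by (rule SUP_subset_mono) (use ST in auto)
next
  show "curve_length f T \<le> curve_length f S"
    unfolding curve_length_ps[of f T]
  proof (rule SUP_least)
    fix ts assume "ts \<in> {ts. sorted ts \<and> set ts \<subseteq> T}"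
    hence ts: "sorted ts" "set ts \<subseteq> T" by auto
    have ev: "eventually (\<lambda>d. d \<in> {0<..<1}) (at_right (0::real))"
      by (rule eventually_at_right_real) simp
    have le: "eventually (\<lambda>d. ereal (ps (\<lambda>t. f (\<phi> d t)) ts) \<le> curve_length f S) (at_right 0)"
      using ev
    proof eventually_elim
      case (elim d)
      have "sorted (map (\<phi> d) ts)" using ts(1) elim
        by (simp add: sorted_map) (auto elim: sorted_wrt_mono_rel[rotated] intro: mono)
      moreover have "set (map (\<phi> d) ts) \<subseteq> S" using ts(2) elim inS by auto
      ultimately have "ereal (ps f (map (\<phi> d) ts)) \<le> curve_length f S"
        unfolding curve_length_ps by (intro SUP_upper) auto
      thus ?case by (simp add: ps_map)
    qed
    have lim2: "((\<lambda>d. ereal (ps (\<lambda>t. f (\<phi> d t)) ts)) \<longlongrightarrow> ereal (ps f ts)) (at_right 0)"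
      unfolding ps_def
    proof (intro tendsto_intros)
      fix i assume "i \<in> {..<length ts - 1}"
      hence i: "ts ! i \<in> T" "ts ! Suc i \<in> T" using ts(2) by (auto dest!: nth_mem)
      have ev2: "\<And>t. t \<in> T \<Longrightarrow> eventually (\<lambda>d. \<phi> d t \<in> T) (at_right 0)"
        using ev by eventually_elim (use inS ST in auto)
      show "((\<lambda>d. f (\<phi> d (ts ! i))) \<longlongrightarrow> f (ts ! i)) (at_right 0)"
        by (rule continuous_on_tendsto_compose[OF cont lim i(1) ev2]) (use i in auto)
      show "((\<lambda>d. f (\<phi> d (ts ! Suc i))) \<longlongrightarrow> f (ts ! Suc i)) (at_right 0)"
        by (rule continuous_on_tendsto_compose[OF cont lim i(2) ev2]) (use i in auto)
    qed
    show "ereal (ps f ts) \<le> curve_length f S"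
      by (rule tendsto_le[OF trivial_limit_at_right_real tendsto_const lim2 le])
  qed
qed

lemma curve_length_Ico:
  assumes "b > 0" "continuous_on {0..b} f"
  shows "curve_length f {0..<b} = curve_length f {0..b}"
proof (rule curve_length_approx[where \<phi>="\<lambda>d t. (1 - d) * t"])
  fix d t :: real assume d: "0 < d" "d < 1" and t: "t \<in> {0..b}"
  have "(1 - d) * t \<le> (1 - d) * b" using d t by (intro mult_left_mono) auto
  also have "\<dots> < b" using d assms(1) by (simp add: algebra_simps)
  finally show "(1 - d) * t \<in> {0..<b}" using d t by auto
next
  fix t :: real
  have "((\<lambda>d. (1 - d) * t) \<longlongrightarrow> (1 - 0) * t) (at_right 0)"
    by (intro tendsto_intros)
  thus "((\<lambda>d. (1 - d) * t) \<longlongrightarrow> t) (at_right 0)" by simp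
qed (use assms in \<open>auto intro: mult_left_mono\<close>)

lemma curve_length_Ioc:
  assumes "b > 0" "continuous_on {0..b} f"
  shows "curve_length f {0<..b} = curve_length f {0..b}"
proof (rule curve_length_approx[where \<phi>="\<lambda>d t. d * b + (1 - d) * t"])
  fix d t :: real assume d: "0 < d" "d < 1" and t: "t \<in> {0..b}"
  have "(1 - d) * t \<le> (1 - d) * b" using d t by (intro mult_left_mono) auto
  moreover have "0 \<le> (1 - d) * t" using d t by auto
  moreover have "0 < d * b" using d assms by auto
  ultimately show "d * b + (1 - d) * t \<in> {0<..b}" by (auto simp: algebra_simps)
next
  fix t :: real
  have "((\<lambda>d. d * b + (1 - d) * t) \<longlongrightarrow> 0 * b + (1 - 0) * t) (at_right 0)"
    by (intro tendsto_intros)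
  thus "((\<lambda>d. d * b + (1 - d) * t) \<longlongrightarrow> t) (at_right 0)" by simp
qed (use assms in \<open>auto intro: mult_left_mono\<close>)



locale pw =
  fixes l :: real and \<beta> h :: "real \<Rightarrow> real^3" and M1 M2 M3 :: "real^3^3"
  assumes l: "l > 0"
  and h1: "\<And>t. t \<in> {0..<l/4} \<Longrightarrow> h t = \<beta> t"
  and h2: "\<And>t. t \<in> {l/4..<l/2} \<Longrightarrow> h t = M1 *v \<beta> (l/2 - t)"
  and h3: "\<And>t. t \<in> {l/2..<3*l/4} \<Longrightarrow> h t = M2 *v \<beta> (t - l/2)"
  and h4: "\<And>t. t \<in> {3*l/4..<l} \<Longrightarrow> h t = M3 *v \<beta> (l - t)"
  and c1: "\<beta> (l/4) = M1 *v \<beta> (l/4)" and c2: "M1 *v \<beta> 0 = M2 *v \<beta> 0"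
  and c3: "M2 *v \<beta> (l/4) = M3 *v \<beta> (l/4)" and c4: "M3 *v \<beta> 0 = \<beta> 0"
begin

lemma p0: "t \<in> {-l/4..0} \<Longrightarrow> per_ext l h t = M3 *v \<beta> (-t)"
proof -
  assume t: "t \<in> {-l/4..0}"
  show ?thesis
  proof (cases "t = 0")
    case True
    thus ?thesis using l h1[of 0] c4 by (simp add: per_ext_def rmod_id)
  next
    case False
    hence "rmod l t = t + l" using t l by (intro rmod_neg) auto
    thus ?thesis using h4[of "t + l"] t False l by (simp add: per_ext_def)
  qed
qed

lemma p1: "t \<in> {0..l/4} \<Longrightarrow> per_ext l h t = \<beta> t"
proof -
  assume t: "t \<in> {0..l/4}"
  have r: "rmod l t = t" using t l by (intro rmod_id) auto
  show ?thesis
  proof (cases "t = l/4")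
    case True
    have "l / 2 - l / 4 = l / 4" by simp
    thus ?thesis using l h2[of "l/4"] c1 unfolding per_ext_def r unfolding True by simp
  next
    case False
    thus ?thesis using h1[of t] t r by (simp add: per_ext_def)
  qed
qed

lemma p2: "t \<in> {l/4..l/2} \<Longrightarrow> per_ext l h t = M1 *v \<beta> (l/2 - t)"
proof -
  assume t: "t \<in> {l/4..l/2}"
  have r: "rmod l t = t" using t l by (intro rmod_id) auto
  show ?thesis
  proof (cases "t = l/2")
    case True
    thus ?thesis using l h3[of "l/2"] c2 unfolding per_ext_def r unfolding True by simp
  next
    case False
    thus ?thesis using h2[of t] t r by (simp add: per_ext_def)
  qed
qed

lemma p3: "t \<in> {l/2..3*l/4} \<Longrightarrow> per_ext l h t = M2 *v \<beta> (t - l/2)"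
proof -
  assume t: "t \<in> {l/2..3*l/4}"
  have r: "rmod l t = t" using t l by (intro rmod_id) auto
  show ?thesis
  proof (cases "t = 3*l/4")
    case True
    have "3 * l / 4 - l / 2 = l / 4" "l - 3 * l / 4 = l / 4" by simp_all
    thus ?thesis using l h4[of "3*l/4"] c3 unfolding per_ext_def r unfolding True by simp
  next
    case False
    thus ?thesis using h3[of t] t r by (simp add: per_ext_def)
  qed
qed

lemma p4: "t \<in> {3*l/4..l} \<Longrightarrow> per_ext l h t = M3 *v \<beta> (l - t)"
proof -
  assume t: "t \<in> {3*l/4..l}"
  show ?thesis
  proof (cases "t = l")
    case True
    thus ?thesis using l h1[of 0] c4 by (simp add: per_ext_def rmod_l)
  next
    case False
    hence r: "rmod l t = t" using t l by (intro rmod_id) auto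
    thus ?thesis using h4[of t] t r False by (simp add: per_ext_def)
  qed
qed

lemma cont_loc:
  assumes cb: "continuous_on {0..l/4} \<beta>"
  shows "continuous_on {-l/4..l} (per_ext l h)"
proof -
  have pc: "continuous_on I (\<lambda>t. M *v \<beta> (\<phi> t))" if "continuous_on I \<phi>" "\<phi> ` I \<subseteq> {0..l/4}" for I :: "real set" and \<phi> :: "real \<Rightarrow> real" and M :: "real^3^3"
    by (rule continuous_on_compose2[of UNIV "(*v) M"])
       (auto intro: continuous_on_compose2[OF cb that] matrix_vector_mult_linear_continuous_on)
  have C0: "continuous_on {-l/4..0} (per_ext l h)"
  proof (rule continuous_on_cong[THEN iffD2, OF refl p0])
    show "continuous_on {-l/4..0} (\<lambda>t. M3 *v \<beta> (- t))"
      by (rule pc[where \<phi>="\<lambda>t. - t"]) (auto intro!: continuous_intros)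
  qed
  have C1: "continuous_on {0..l/4} (per_ext l h)"
    by (rule continuous_on_cong[THEN iffD2, OF refl p1]) (use cb in auto)
  have C2: "continuous_on {l/4..l/2} (per_ext l h)"
  proof (rule continuous_on_cong[THEN iffD2, OF refl p2])
    show "continuous_on {l/4..l/2} (\<lambda>t. M1 *v \<beta> (l/2 - t))"
      by (rule pc[where \<phi>="\<lambda>t. l/2 - t"]) (auto intro!: continuous_intros)
  qed
  have C3: "continuous_on {l/2..3*l/4} (per_ext l h)"
  proof (rule continuous_on_cong[THEN iffD2, OF refl p3])
    show "continuous_on {l/2..3*l/4} (\<lambda>t. M2 *v \<beta> (t - l/2))"
      by (rule pc[where \<phi>="\<lambda>t. t - l/2"]) (auto intro!: continuous_intros)
  qed
  have C4: "continuous_on {3*l/4..l} (per_ext l h)"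
  proof (rule continuous_on_cong[THEN iffD2, OF refl p4])
    show "continuous_on {3*l/4..l} (\<lambda>t. M3 *v \<beta> (l - t))"
      by (rule pc[where \<phi>="\<lambda>t. l - t"]) (auto intro!: continuous_intros)
  qed
  have U: "{-l/4..l} = (((({-l/4..0} \<union> {0..l/4}) \<union> {l/4..l/2}) \<union> {l/2..3*l/4}) \<union> {3*l/4..l})"
    using l by auto
  show ?thesis unfolding U
    by (intro continuous_on_closed_Un C0 C1 C2 C3 C4 closed_Un closed_real_atLeastAtMost)
qed

end

lemma per_cont:
  assumes l: "l > 0" and c: "continuous_on {-l/4..l} (per_ext l h)"
  shows "continuous_on UNIV (per_ext l h)"
proof (rule continuous_at_imp_continuous_on, intro ballI)
  fix x :: real
  define k where "k = - \<lfloor>x / l\<rfloor>"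
  have y: "x + of_int k * l = rmod l x" unfolding k_def rmod_def by (simp add: algebra_simps)
  have "isCont (per_ext l h) (x + of_int k * l)"
    using rmod_range[OF l, of x] l unfolding y
    by (intro continuous_on_interior[OF c]) auto
  moreover have tr: "isCont (\<lambda>t. t + of_int k * l) x" by (intro continuous_intros)
  ultimately have "isCont (\<lambda>t. per_ext l h (t + of_int k * l)) x"
    using isCont_o2[OF tr, of "per_ext l h"] by blast
  moreover have "(\<lambda>t. per_ext l h (t + of_int k * l)) = per_ext l h"
    using per_ext_shift[OF l] by auto
  ultimately show "isCont (per_ext l h) x" by simp
qed



lemma mv_scale: "M *v (c *\<^sub>R v) = c *\<^sub>R (M *v (v::real^'n))"
  by (simp add: vec_eq_iff matrix_vector_mult_def sum_distrib_left algebra_simps)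

lemma mv_neg: "M *v (- v) = - (M *v (v::real^'n))"
  by (simp add: vec_eq_iff matrix_vector_mult_def sum_negf)

lemma vd_notin:
  assumes "closed I" "x \<notin> I"
  shows "(f has_vector_derivative d) (at x within I)"
proof -
  have "\<not> x islimpt I" using assms closed_limpt by blast
  hence "at x within I = bot" using trivial_limit_within by blast
  thus ?thesis unfolding has_vector_derivative_def has_derivative_def
    by (simp add: bounded_linear_scaleR_left)
qed

lemma vd_Un:
  assumes "(f has_vector_derivative d) (at x within S)" "(f has_vector_derivative d) (at x within T)"
  shows "(f has_vector_derivative d) (at x within S \<union> T)"
  using assms unfolding has_vector_derivative_def has_derivative_within Lim_within_Un by blast

lemma piece_case:
  assumes "closed I" "\<And>t. t \<in> I \<Longrightarrow> F t = \<Phi> t"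
    "\<And>t. t \<in> I \<Longrightarrow> (\<Phi> has_vector_derivative \<Phi>' t) (at t within I)"
    "\<And>t. t \<in> I \<Longrightarrow> D t = \<Phi>' t"
  shows "(F has_vector_derivative D x) (at x within I)"
proof (cases "x \<in> I")
  case True
  show ?thesis
    by (rule has_vector_derivative_transform[OF True assms(2)])
       (use assms(3,4) True in auto)
qed (use vd_notin assms(1) in auto)

lemma piece_deriv:
  fixes \<beta> :: "real \<Rightarrow> real^3"
  assumes d: "\<And>u. u \<in> {0..b} \<Longrightarrow> (\<beta> has_vector_derivative \<beta>' u) (at u within {0..b})"
    and p: "(\<phi> has_real_derivative s) (at x within I)" and im: "\<phi> ` I \<subseteq> {0..b}" and x: "x \<in> I"
  shows "((\<lambda>t. M *v \<beta> (\<phi> t)) has_vector_derivative M *v (s *\<^sub>R \<beta>' (\<phi> x))) (at x within I)"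
proof -
  have "(\<beta> has_vector_derivative \<beta>' (\<phi> x)) (at (\<phi> x) within \<phi> ` I)"
    by (rule has_vector_derivative_within_subset[OF d im]) (use im x in auto)
  from vector_diff_chain_within[OF p[unfolded has_real_derivative_iff_has_vector_derivative] this]
  have "((\<lambda>t. \<beta> (\<phi> t)) has_vector_derivative s *\<^sub>R \<beta>' (\<phi> x)) (at x within I)"
    by (simp add: comp_def)
  thus ?thesis by (rule bounded_linear.has_vector_derivative[OF matrix_vector_mul_bounded_linear])
qed

lemma per_deriv_loc:
  assumes P: "pw l \<beta> h M1 M2 M3" and Q: "pw l \<beta>' G (-M1) M2 (-M3)"
    and d: "\<And>u. u \<in> {0..l/4} \<Longrightarrow> (\<beta> has_vector_derivative \<beta>' u) (at u within {0..l/4})"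
    and y: "y \<in> {-l/4..l}"
  shows "(per_ext l h has_vector_derivative per_ext l G y) (at y within {-l/4..l})"
proof -
  have l: "l > 0" using P pw.l by blast
  have D0: "(per_ext l h has_vector_derivative per_ext l G y) (at y within {-l/4..0})"
  proof (rule piece_case[OF _ pw.p0[OF P]])
    fix t assume t: "t \<in> {-l/4..0}"
    show "((\<lambda>t. M3 *v \<beta> (- t)) has_vector_derivative M3 *v ((-1) *\<^sub>R \<beta>' (- t))) (at t within {-l/4..0})"
      by (rule piece_deriv[OF d]) (use t in \<open>auto intro!: derivative_eq_intros\<close>)
    show "per_ext l G t = M3 *v ((-1) *\<^sub>R \<beta>' (- t))"
      using pw.p0[OF Q t] by (simp add: neg_mv mv_neg)
  qed auto
  have D1: "(per_ext l h has_vector_derivative per_ext l G y) (at y within {0..l/4})"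
  proof (rule piece_case[OF _ pw.p1[OF P]])
    fix t assume t: "t \<in> {0..l/4}"
    show "(\<beta> has_vector_derivative \<beta>' t) (at t within {0..l/4})" using d t .
    show "per_ext l G t = \<beta>' t" using pw.p1[OF Q t] .
  qed auto
  have D2: "(per_ext l h has_vector_derivative per_ext l G y) (at y within {l/4..l/2})"
  proof (rule piece_case[OF _ pw.p2[OF P]])
    fix t assume t: "t \<in> {l/4..l/2}"
    show "((\<lambda>t. M1 *v \<beta> (l/2 - t)) has_vector_derivative M1 *v ((-1) *\<^sub>R \<beta>' (l/2 - t))) (at t within {l/4..l/2})"
      by (rule piece_deriv[OF d]) (use t in \<open>auto intro!: derivative_eq_intros\<close>)
    show "per_ext l G t = M1 *v ((-1) *\<^sub>R \<beta>' (l/2 - t))"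
      using pw.p2[OF Q t] by (simp add: neg_mv mv_neg)
  qed auto
  have D3: "(per_ext l h has_vector_derivative per_ext l G y) (at y within {l/2..3*l/4})"
  proof (rule piece_case[OF _ pw.p3[OF P]])
    fix t assume t: "t \<in> {l/2..3*l/4}"
    show "((\<lambda>t. M2 *v \<beta> (t - l/2)) has_vector_derivative M2 *v (1 *\<^sub>R \<beta>' (t - l/2))) (at t within {l/2..3*l/4})"
      by (rule piece_deriv[OF d]) (use t in \<open>auto intro!: derivative_eq_intros\<close>)
    show "per_ext l G t = M2 *v (1 *\<^sub>R \<beta>' (t - l/2))"
      using pw.p3[OF Q t] by simp
  qed auto
  have D4: "(per_ext l h has_vector_derivative per_ext l G y) (at y within {3*l/4..l})"
  proof (rule piece_case[OF _ pw.p4[OF P]])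
    fix t assume t: "t \<in> {3*l/4..l}"
    show "((\<lambda>t. M3 *v \<beta> (l - t)) has_vector_derivative M3 *v ((-1) *\<^sub>R \<beta>' (l - t))) (at t within {3*l/4..l})"
      by (rule piece_deriv[OF d]) (use t in \<open>auto intro!: derivative_eq_intros\<close>)
    show "per_ext l G t = M3 *v ((-1) *\<^sub>R \<beta>' (l - t))"
      using pw.p4[OF Q t] by (simp add: neg_mv mv_neg)
  qed auto
  have U: "{-l/4..l} = (((({-l/4..0} \<union> {0..l/4}) \<union> {l/4..l/2}) \<union> {l/2..3*l/4}) \<union> {3*l/4..l})"
    using l by auto
  show ?thesis unfolding U by (intro vd_Un D0 D1 D2 D3 D4)
qed

lemma per_deriv:
  assumes P: "pw l \<beta> h M1 M2 M3" and Q: "pw l \<beta>' G (-M1) M2 (-M3)"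
    and d: "\<And>u. u \<in> {0..l/4} \<Longrightarrow> (\<beta> has_vector_derivative \<beta>' u) (at u within {0..l/4})"
  shows "(per_ext l h has_vector_derivative per_ext l G x) (at x)"
proof -
  have l: "l > 0" using P pw.l by blast
  define k where "k = - \<lfloor>x / l\<rfloor>"
  define y where "y = x + of_int k * l"
  have y': "y = rmod l x" unfolding y_def k_def rmod_def by (simp add: algebra_simps)
  have yi: "y \<in> interior {-l/4..l}" using rmod_range[OF l, of x] l unfolding y' by auto
  have "(per_ext l h has_vector_derivative per_ext l G y) (at y)"
    using per_deriv_loc[OF P Q d interior_subset[THEN subsetD, OF yi]] at_within_interior[OF yi] by simp
  hence "(per_ext l h has_vector_derivative per_ext l G y) (at ((\<lambda>t. t + of_int k * l) x))"
    by (simp add: y_def)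
  moreover have "((\<lambda>t. t + of_int k * l) has_vector_derivative 1) (at x)"
    unfolding has_real_derivative_iff_has_vector_derivative[symmetric] by (auto intro!: derivative_eq_intros)
  ultimately have "((per_ext l h \<circ> (\<lambda>t. t + of_int k * l)) has_vector_derivative per_ext l G y) (at x)"
    using vector_diff_chain_at[of "\<lambda>t. t + of_int k * l" 1 x "per_ext l h"] by simp
  moreover have "per_ext l h \<circ> (\<lambda>t. t + of_int k * l) = per_ext l h"
    using per_ext_shift[OF l] by (auto simp: comp_def)
  moreover have "per_ext l G y = per_ext l G x" unfolding y_def by (rule per_ext_shift[OF l])
  ultimately show ?thesis by simp
qed



lemma vec3_eq: "(x::real^3) = y \<longleftrightarrow> x$1 = y$1 \<and> x$2 = y$2 \<and> x$3 = y$3"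
  by (simp add: vec_eq_iff forall_3)

lemma R_comps:
  "(R1 *v v)$1 = v$1" "(R1 *v v)$2 = - v$2" "(R1 *v v)$3 = - v$3"
  "(R2 *v v)$1 = - v$1" "(R2 *v v)$2 = v$2" "(R2 *v v)$3 = - v$3"
  "(R3 *v v)$1 = - v$1" "(R3 *v v)$2 = - v$2" "(R3 *v v)$3 = v$3"
  by (simp_all add: R1_apply R2_apply R3_apply)

lemma range_e1: "v \<in> range (\<lambda>c. c *\<^sub>R e1) \<longleftrightarrow> v$2 = 0 \<and> v$3 = 0"
proof
  assume "v \<in> range (\<lambda>c. c *\<^sub>R e1)" thus "v$2 = 0 \<and> v$3 = 0" by (auto simp: e1_def axis_def)
next
  assume a: "v$2 = 0 \<and> v$3 = 0"
  have "v = (v$1) *\<^sub>R e1" using a by (simp add: vec3_eq e1_def axis_def)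
  thus "v \<in> range (\<lambda>c. c *\<^sub>R e1)" by blast
qed

lemma range_e3: "v \<in> range (\<lambda>c. c *\<^sub>R e3) \<longleftrightarrow> v$1 = 0 \<and> v$2 = 0"
proof
  assume "v \<in> range (\<lambda>c. c *\<^sub>R e3)" thus "v$1 = 0 \<and> v$2 = 0" by (auto simp: e3_def axis_def)
next
  assume a: "v$1 = 0 \<and> v$2 = 0"
  have "v = (v$3) *\<^sub>R e3" using a by (simp add: vec3_eq e3_def axis_def)
  thus "v \<in> range (\<lambda>c. c *\<^sub>R e3)" by blast
qed

lemma span_e12: "v \<in> span {e1, e2} \<longleftrightarrow> v$3 = 0"
proof
  assume "v \<in> span {e1, e2}"
  moreover have "span {e1, e2} \<subseteq> {v::real^3. v$3 = 0}"
    by (rule span_minimal) (auto simp: e1_def e2_def axis_def subspace_def)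
  ultimately show "v$3 = 0" by blast
next
  assume a: "v$3 = 0"
  have "v = (v$1) *\<^sub>R e1 + (v$2) *\<^sub>R e2" using a by (simp add: vec3_eq e1_def e2_def axis_def)
  moreover have "(v$1) *\<^sub>R e1 + (v$2) *\<^sub>R e2 \<in> span {e1, e2}"
    by (intro span_add span_mul span_base) auto
  ultimately show "v \<in> span {e1, e2}" by simp
qed

lemma span_e23: "v \<in> span {e2, e3} \<longleftrightarrow> v$1 = 0"
proof
  assume "v \<in> span {e2, e3}"
  moreover have "span {e2, e3} \<subseteq> {v::real^3. v$1 = 0}"
    by (rule span_minimal) (auto simp: e3_def e2_def axis_def subspace_def)
  ultimately show "v$1 = 0" by blast
next
  assume a: "v$1 = 0"
  have "v = (v$2) *\<^sub>R e2 + (v$3) *\<^sub>R e3" using a by (simp add: vec3_eq e3_def e2_def axis_def)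
  moreover have "(v$2) *\<^sub>R e2 + (v$3) *\<^sub>R e3 \<in> span {e2, e3}"
    by (intro span_add span_mul span_base) auto
  ultimately show "v \<in> span {e2, e3}" by simp
qed

lemma img_refl: "(\<lambda>t. c - t) ` {a..<b} = {c - b<..c - (a::real)}"
proof (intro equalityI subsetI)
  fix x assume "x \<in> {c - b<..c - a}"
  thus "x \<in> (\<lambda>t. c - t) ` {a..<b}" by (intro image_eqI[where x="c - x"]) auto
qed auto

lemma img_shift: "(\<lambda>t. t - c) ` {a..<b} = {a - c..<b - (c::real)}"
proof (intro equalityI subsetI)
  fix x assume "x \<in> {a - c..<b - c}"
  thus "x \<in> (\<lambda>t. t - c) ` {a..<b}" by (intro image_eqI[where x="x + c"]) auto
qed auto



lemma cont_nec:
  assumes l: "l > 0" and ca: "continuous_on {0..l/4} \<alpha>"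
    and g1: "\<And>t. t \<in> {0..<l/4} \<Longrightarrow> g t = \<alpha> t"
    and g2: "\<And>t. t \<in> {l/4..<l/2} \<Longrightarrow> g t = R1 *v \<alpha> (l/2 - t)"
    and g4: "\<And>t. t \<in> {3*l/4..<l} \<Longrightarrow> g t = R3 *v \<alpha> (l - t)"
    and c: "continuous_on UNIV (per_ext l g)"
  shows "\<alpha> (l/4) = R1 *v \<alpha> (l/4)" "R3 *v \<alpha> 0 = \<alpha> 0"
proof -
  have lim: "\<And>x S. (per_ext l g \<longlongrightarrow> per_ext l g x) (at x within S)"
    using c unfolding continuous_on_def by (auto intro: tendsto_within_subset)
  have q: "0 < l/4" using l by simp
  have "(per_ext l g \<longlongrightarrow> \<alpha> (l/4)) (at_left (l/4))"
  proof (rule tendsto_cong[THEN iffD1])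
    show "\<forall>\<^sub>F t in at_left (l/4). \<alpha> t = per_ext l g t"
      using eventually_at_left_real[OF q] 
      by eventually_elim (use l g1 in \<open>auto simp: per_ext_def rmod_id\<close>)
    show "(\<alpha> \<longlongrightarrow> \<alpha> (l/4)) (at_left (l/4))"
      using ca q unfolding continuous_on_def at_within_Icc_at_left[OF q, symmetric] by auto
  qed
  moreover have "per_ext l g (l/4) = R1 *v \<alpha> (l/4)"
    using g2[of "l/4"] l by (simp add: per_ext_def rmod_id)
  ultimately show "\<alpha> (l/4) = R1 *v \<alpha> (l/4)"
    using tendsto_unique[OF trivial_limit_at_left_real _ lim] by metis
  have q2: "-l/4 < 0" using l by simp
  have "(per_ext l g \<longlongrightarrow> R3 *v \<alpha> (- 0)) (at_left 0)"
  proof (rule tendsto_cong[THEN iffD1])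
    show "\<forall>\<^sub>F t in at_left 0. R3 *v \<alpha> (- t) = per_ext l g t"
      using eventually_at_left_real[OF q2]
    proof eventually_elim
      case (elim t)
      hence "rmod l t = t + l" using l by (intro rmod_neg) auto
      thus ?case using g4[of "t + l"] elim by (simp add: per_ext_def)
    qed
    have "continuous_on {0..l/4} (\<lambda>u. R3 *v \<alpha> u)"
      by (rule continuous_on_compose2[of UNIV "(*v) R3"]) (auto intro: ca matrix_vector_mult_linear_continuous_on)
    moreover have "((\<lambda>t. - t) \<longlongrightarrow> - 0) (at_left (0::real))" by (intro tendsto_intros)
    moreover have "\<forall>\<^sub>F t in at_left 0. - t \<in> {0..l/4}"
      using eventually_at_left_real[OF q2] by eventually_elim auto
    ultimately show "((\<lambda>t. R3 *v \<alpha> (- t)) \<longlongrightarrow> R3 *v \<alpha> (- 0)) (at_left 0)"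
      by (intro continuous_on_tendsto_compose[where f="\<lambda>u. R3 *v \<alpha> u"]) (use l in auto)
  qed
  moreover have "per_ext l g 0 = \<alpha> 0"
    using g1[of 0] l by (simp add: per_ext_def rmod_id)
  ultimately show "R3 *v \<alpha> 0 = \<alpha> 0"
    using tendsto_unique[OF trivial_limit_at_left_real _ lim] by (metis minus_zero)
qed


theorem lemma3p5:
  fixes l :: real and \<alpha> g :: "real \<Rightarrow> real^3"
  assumes l_pos: "l > 0"
    and \<alpha>_cont: "continuous_on {0..l/4} \<alpha>"
    and len_pos: "0 < curve_length \<alpha> {0..l/4}"
    and len_fin: "curve_length \<alpha> {0..l/4} < \<infinity>"
    and g1: "\<And>t. t \<in> {0..<l/4} \<Longrightarrow> g t = \<alpha> t"
    and g2: "\<And>t. t \<in> {l/4..<l/2} \<Longrightarrow> g t = R1 *v \<alpha> (psi1 l t)"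
    and g3: "\<And>t. t \<in> {l/2..<3*l/4} \<Longrightarrow> g t = R2 *v \<alpha> (psi2 l t)"
    and g4: "\<And>t. t \<in> {3*l/4..<l} \<Longrightarrow> g t = R3 *v \<alpha> (psi3 l t)"
  shows "(curve_length g {0..<l/4} + curve_length g {l/4..<l/2}
           + curve_length g {l/2..<3*l/4} + curve_length g {3*l/4..<l}
         = 4 * curve_length \<alpha> {0..l/4})
    \<and> (continuous_on UNIV (per_ext l g) \<longleftrightarrow>
           (\<alpha> 0 \<in> range (\<lambda>c. c *\<^sub>R e3) \<and> \<alpha> (l/4) \<in> range (\<lambda>c. c *\<^sub>R e1)))
    \<and> (\<forall>\<alpha>'. (\<forall>t\<in>{0..l/4}. (\<alpha> has_vector_derivative \<alpha>' t) (at t within {0..l/4}))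
            \<and> continuous_on {0..l/4} \<alpha>'
            \<longrightarrow> (per_ext l g C1_differentiable_on UNIV \<longleftrightarrow>
                 (\<alpha> 0 \<in> range (\<lambda>c. c *\<^sub>R e3) \<and> \<alpha> (l/4) \<in> range (\<lambda>c. c *\<^sub>R e1)
                  \<and> \<alpha>' 0 \<in> span {e1, e2} \<and> \<alpha>' (l/4) \<in> span {e2, e3})))"
proof -
  have l: "l > 0" by (rule l_pos)
  have h2: "g t = R1 *v \<alpha> (l/2 - t)" if "t \<in> {l/4..<l/2}" for t
    using g2[OF that] that l by (simp add: psi1_def rmod_id)
  have h3: "g t = R2 *v \<alpha> (t - l/2)" if "t \<in> {l/2..<3*l/4}" for t
    using g3[OF that] that l by (simp add: psi2_def rmod_id)
  have h4: "g t = R3 *v \<alpha> (l - t)" if "t \<in> {3*l/4..<l}" for t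
    using g4[OF that] that l by (simp add: psi3_def rmod_id)
  define L where "L = curve_length \<alpha> {0..l/4}"
  have q: "l/4 > 0" using l by simp
  have iso1: "\<And>x y. dist (R1 *v x) (R1 *v y) = dist x y" by (rule dist_R[OF R1_apply])
  have iso2: "\<And>x y. dist (R2 *v x) (R2 *v y) = dist x y" by (rule dist_R[OF R2_apply])
  have iso3: "\<And>x y. dist (R3 *v x) (R3 *v y) = dist x y" by (rule dist_R[OF R3_apply])
  have L1: "curve_length g {0..<l/4} = L"
    unfolding L_def using curve_length_cong[where I="{0..<l/4}" and f=g and h=\<alpha>, OF g1] curve_length_Ico[OF q \<alpha>_cont] by simp
  have L2: "curve_length g {l/4..<l/2} = L"
  proof -
    have "curve_length g {l/4..<l/2} = curve_length (\<lambda>t. R1 *v \<alpha> (l/2 - t)) {l/4..<l/2}"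
      by (rule curve_length_cong[OF h2])
    also have "\<dots> = curve_length (\<lambda>t. \<alpha> (l/2 - t)) {l/4..<l/2}"
      by (rule curve_length_iso[where R="(*v) R1" and f="\<lambda>t. \<alpha> (l/2 - t)"]) (rule iso1)
    also have "\<dots> = curve_length \<alpha> {0<..l/4}"
      unfolding curve_length_reflect img_refl by simp
    also have "\<dots> = L" unfolding L_def by (rule curve_length_Ioc[OF q \<alpha>_cont])
    finally show ?thesis .
  qed
  have L3: "curve_length g {l/2..<3*l/4} = L"
  proof -
    have "curve_length g {l/2..<3*l/4} = curve_length (\<lambda>t. R2 *v \<alpha> (t - l/2)) {l/2..<3*l/4}"
      by (rule curve_length_cong[OF h3])
    also have "\<dots> = curve_length (\<lambda>t. \<alpha> (t - l/2)) {l/2..<3*l/4}"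
      by (rule curve_length_iso[where R="(*v) R2" and f="\<lambda>t. \<alpha> (t - l/2)"]) (rule iso2)
    also have "\<dots> = curve_length \<alpha> {0..<l/4}"
      unfolding curve_length_shift img_shift by simp
    also have "\<dots> = L" unfolding L_def by (rule curve_length_Ico[OF q \<alpha>_cont])
    finally show ?thesis .
  qed
  have L4: "curve_length g {3*l/4..<l} = L"
  proof -
    have "curve_length g {3*l/4..<l} = curve_length (\<lambda>t. R3 *v \<alpha> (l - t)) {3*l/4..<l}"
      by (rule curve_length_cong[OF h4])
    also have "\<dots> = curve_length (\<lambda>t. \<alpha> (l - t)) {3*l/4..<l}"
      by (rule curve_length_iso[where R="(*v) R3" and f="\<lambda>t. \<alpha> (l - t)"]) (rule iso3)
    also have "\<dots> = curve_length \<alpha> {0<..l/4}"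
      unfolding curve_length_reflect img_refl by simp
    also have "\<dots> = L" unfolding L_def by (rule curve_length_Ioc[OF q \<alpha>_cont])
    finally show ?thesis .
  qed
  have P1: "curve_length g {0..<l/4} + curve_length g {l/4..<l/2}
           + curve_length g {l/2..<3*l/4} + curve_length g {3*l/4..<l}
         = 4 * curve_length \<alpha> {0..l/4}"
    unfolding L1 L2 L3 L4 L_def[symmetric] by (cases L) auto
  let ?C = "\<alpha> 0 \<in> range (\<lambda>c. c *\<^sub>R e3) \<and> \<alpha> (l/4) \<in> range (\<lambda>c. c *\<^sub>R e1)"
  have pwg: "pw l \<alpha> g R1 R2 R3" if ?C
    using that l g1 h2 h3 h4
    by (unfold_locales) (auto simp: range_e1 range_e3 vec3_eq R_comps)
  have nec: ?C if "continuous_on UNIV (per_ext l g)"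
    using cont_nec[OF l \<alpha>_cont g1 h2 h4 that]
    by (auto simp: range_e1 range_e3 vec3_eq R_comps)
  have P2: "continuous_on UNIV (per_ext l g) \<longleftrightarrow> ?C"
  proof
    assume ?C
    thus "continuous_on UNIV (per_ext l g)"
      using per_cont[OF l pw.cont_loc[OF pwg \<alpha>_cont]] by blast
  qed (rule nec)
  have P3: "per_ext l g C1_differentiable_on UNIV \<longleftrightarrow>
                 (?C \<and> \<alpha>' 0 \<in> span {e1, e2} \<and> \<alpha>' (l/4) \<in> span {e2, e3})"
    if d: "\<forall>t\<in>{0..l/4}. (\<alpha> has_vector_derivative \<alpha>' t) (at t within {0..l/4})"
      and ca': "continuous_on {0..l/4} \<alpha>'" for \<alpha>'
  proof
    assume "per_ext l g C1_differentiable_on UNIV"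
    then obtain D where D: "\<And>x. (per_ext l g has_vector_derivative D x) (at x)"
      unfolding C1_differentiable_on_def by blast
    have "continuous_on UNIV (per_ext l g)"
      by (intro continuous_at_imp_continuous_on ballI has_vector_derivative_continuous[OF D])
    hence C: ?C by (rule nec)
    note P = pwg[OF C]
    have nb1: "at (l/4) within {0..l/4} \<noteq> bot" "at 0 within {0..l/4} \<noteq> bot"
      using q by (simp_all add: at_within_Icc_at_left at_within_Icc_at_right)
    have nb2: "at (l/4) within {l/4..l/2} \<noteq> bot" "at 0 within {-l/4..0} \<noteq> bot"
      using q l by (simp_all add: at_within_Icc_at_left at_within_Icc_at_right)
    have a1: "(\<alpha> has_vector_derivative D x) (at x within {0..l/4})" if "x \<in> {0..l/4}" for x
      by (rule has_vector_derivative_transform[OF that _ has_vector_derivative_at_within[OF D]])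
         (rule pw.p1[OF P, symmetric])
    have e1: "\<alpha>' (l/4) = D (l/4)" "\<alpha>' 0 = D 0"
      using vector_derivative_unique_within[OF nb1(1) d[rule_format] a1]
        vector_derivative_unique_within[OF nb1(2) d[rule_format] a1] q by auto
    have "((\<lambda>t. R1 *v \<alpha> (l/2 - t)) has_vector_derivative D (l/4)) (at (l/4) within {l/4..l/2})"
      by (rule has_vector_derivative_transform[OF _ _ has_vector_derivative_at_within[OF D]])
         (use pw.p2[OF P] q in auto)
    moreover have "((\<lambda>t. R1 *v \<alpha> (l/2 - t)) has_vector_derivative R1 *v ((-1) *\<^sub>R \<alpha>' (l/2 - l/4))) (at (l/4) within {l/4..l/2})"
      by (rule piece_deriv[where b="l/4"]) (use d q in \<open>auto intro!: derivative_eq_intros\<close>)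
    ultimately have e2: "D (l/4) = R1 *v (- \<alpha>' (l/4))"
      using vector_derivative_unique_within[OF nb2(1)] by fastforce
    have "((\<lambda>t. R3 *v \<alpha> (- t)) has_vector_derivative D 0) (at 0 within {-l/4..0})"
      by (rule has_vector_derivative_transform[OF _ _ has_vector_derivative_at_within[OF D]])
         (use pw.p0[OF P] q in auto)
    moreover have "((\<lambda>t. R3 *v \<alpha> (- t)) has_vector_derivative R3 *v ((-1) *\<^sub>R \<alpha>' (- 0))) (at 0 within {-l/4..0})"
      by (rule piece_deriv[where b="l/4"]) (use d q in \<open>auto intro!: derivative_eq_intros\<close>)
    ultimately have e3: "D 0 = R3 *v (- \<alpha>' 0)"
      using vector_derivative_unique_within[OF nb2(2)] by fastforce
    have "\<alpha>' (l/4) $ 1 = 0" using e1 e2 by (simp add: mv_neg vec3_eq R_comps)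
    moreover have "\<alpha>' 0 $ 3 = 0" using e1 e3 by (simp add: mv_neg vec3_eq R_comps)
    ultimately show "?C \<and> \<alpha>' 0 \<in> span {e1, e2} \<and> \<alpha>' (l/4) \<in> span {e2, e3}"
      using C by (simp add: span_e12 span_e23)
  next
    assume A: "?C \<and> \<alpha>' 0 \<in> span {e1, e2} \<and> \<alpha>' (l/4) \<in> span {e2, e3}"
    note P = pwg[OF conjunct1[OF A]]
    have z: "\<alpha>' 0 $ 3 = 0" "\<alpha>' (l/4) $ 1 = 0" using A by (auto simp: span_e12 span_e23)
    define G where "G t = (if t < l/4 then \<alpha>' t else if t < l/2 then (-R1) *v \<alpha>' (l/2 - t)
       else if t < 3*l/4 then R2 *v \<alpha>' (t - l/2) else (-R3) *v \<alpha>' (l - t))" for t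
    have Q: "pw l \<alpha>' G (-R1) R2 (-R3)"
      using l z by (unfold_locales) (auto simp: G_def neg_mv vec3_eq R_comps)
    have "(per_ext l g has_vector_derivative per_ext l G x) (at x)" for x
      by (rule per_deriv[OF P Q]) (use d in auto)
    moreover have "continuous_on UNIV (per_ext l G)"
      by (rule per_cont[OF l pw.cont_loc[OF Q ca']])
    ultimately show "per_ext l g C1_differentiable_on UNIV"
      unfolding C1_differentiable_on_def by blast
  qed
  show ?thesis using P1 P2 P3 by blast
qed

end
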